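(* Let $K\ge3$, $p\in(0,1)$ and $f\in\mathcal M_p$ with $\sigma_f$ the identity. Then for every $r\in\{2,\dots,K-1\}$, $$\sum_{i=1}^{r-1}\Big(f([K-r+1]\mid[K-i+1])-(K-r+1)\,f(K-r+2\mid[K-i+1])\Big)D(f,i)=1,$$ and consequently $$D(f,r)=\frac{1-\sum_{i=1}^{r-1}\big(f([K-r]\mid[K-i+1])-(K-r)f(K-r+1\mid[K-i+1])\big)D(f,i)}{1-(K-r+1)f(K-r+1\mid[K-r+1])}.$$
   Context: Items are $[K]=\{1,\dots,K\}$, $\mathcal S=\{S\subseteq[K]:|S|\ge2\}$, $[n]=\{1,\dots,n\}$. A preference $f$ is a family of numbers $f(i\mid S)$, $S\in\mathcal S$, $i\in[K]$; for $S'\subseteq S$, $f(S'\mid S)=\sum_{i\in S'}f(i\mid S)$. For $p\in(0,1)$, $\mathcal M_p$ consists of all $f$ with (i) $f(i\mid S)>0$ iff $i\in S$; (ii) $\sum_{i\in S}f(i\mid S)=1$; (iii) a bijection $\sigma_f:[K]\to[K]$ such that $f(i\mid S)\le pf(i'\mid S)$ for $i,i'\in S$ with $\sigma_f(i')<\sigma_f(i)$. Define $\Delta^i_{K-r+1}=f(K-r+1\mid[K-i+1])-f(K-r+2\mid[K-i+1])$ for $r\in[K-1]$, $i\in[r-1]$; $D(f,1)=\frac{1}{1-Kf(K\mid[K])}$; for $r\in\{2,\dots,K-1\}$, $D(f,r)=\frac{(K-r+1)\sum_{i=1}^{r-1}\Delta^i_{K-r+1}D(f,i)}{1-(K-r+1)f(K-r+1\mid[K-r+1])}$.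 *)

theory Defs
  imports Complex_Main
begin

(* A preference f on items [K] = {1..K}: f i S is f(i|S). *)
type_synonym pref = "nat \<Rightarrow> nat set \<Rightarrow> real"

definition menus :: "nat \<Rightarrow> nat set set" where
  "menus K = {S. S \<subseteq> {1..K} \<and> card S \<ge> 2}"

definition fset :: "pref \<Rightarrow> nat set \<Rightarrow> nat set \<Rightarrow> real" where
  "fset f S' S = (\<Sum>i\<in>S'. f i S)"

(* Conditions (i)-(iii) of M_p, with a given bijection sigma as sigma_f. *)
definition Mp_with :: "nat \<Rightarrow> real \<Rightarrow> (nat \<Rightarrow> nat) \<Rightarrow> pref \<Rightarrow> bool" where
  "Mp_with K p \<sigma> f \<longleftrightarrow>
     bij_betw \<sigma> {1..K} {1..K} \<and>
     (\<forall>S\<in>menus K. \<forall>i\<in>{1..K}. (f i S > 0 \<longleftrightarrow> i \<in> S)) \<and>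
     (\<forall>S\<in>menus K. (\<Sum>i\<in>S. f i S) = 1) \<and>
     (\<forall>S\<in>menus K. \<forall>i\<in>S. \<forall>i'\<in>S. \<sigma> i' < \<sigma> i \<longrightarrow> f i S \<le> p * f i' S)"

definition Mp :: "nat \<Rightarrow> real \<Rightarrow> pref \<Rightarrow> bool" where
  "Mp K p f \<longleftrightarrow> (\<exists>\<sigma>. Mp_with K p \<sigma> f)"

(* \<Delta>^i_{K-r+1} = f(K-r+1 | [K-i+1]) - f(K-r+2 | [K-i+1]) *)
definition Delta :: "nat \<Rightarrow> pref \<Rightarrow> nat \<Rightarrow> nat \<Rightarrow> real" where
  "Delta K f i r = f (K - r + 1) {1..K - i + 1} - f (K - r + 2) {1..K - i + 1}"

(* D(f,r), defined for r \<in> [K-1]; D(f,1) = 1/(1 - K f(K|[K])). *)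
function D :: "nat \<Rightarrow> pref \<Rightarrow> nat \<Rightarrow> real" where
  "D K f r =
     (if r \<le> 1 then 1 / (1 - real K * f K {1..K})
      else (real (K - r + 1) * (\<Sum>i\<in>{1..r-1}. Delta K f i r * D K f i))
           / (1 - real (K - r + 1) * f (K - r + 1) {1..K - r + 1}))"
  by pat_completeness auto
termination
  by (relation "measure (\<lambda>(K, f, r). r)") auto

end

theory Submission
  imports Defs
begin

declare D.simps[simp del]

lemma sum_last: "1 \<le> (m::nat) \<Longrightarrow> (\<Sum>i\<in>{1..m}. g i) = g m + (\<Sum>i\<in>{1..m-1}. (g i::real))"
proof -
  assume "1 \<le> m"
  hence eq: "{1..m} = insert m {1..m-1}" by auto
  have "sum g {1..m} = sum g (insert m {1..m-1})" using eq by (rule arg_cong)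
  also have "\<dots> = g m + sum g {1..m-1}" by (rule sum.insert) auto
  finally show ?thesis .
qed

lemma sum_shift:
  assumes "\<And>i. a i = b i + c * d i"
  shows "(\<Sum>i\<in>A. a i * e i) = (\<Sum>i\<in>A. b i * e i) + c * (\<Sum>i\<in>A. d i * (e i::real))"
proof -
  have "(\<Sum>i\<in>A. a i * e i) = (\<Sum>i\<in>A. b i * e i + c * (d i * e i))"
    by (rule sum.cong) (simp_all add: assms distrib_right mult.assoc)
  also have "\<dots> = (\<Sum>i\<in>A. b i * e i) + c * (\<Sum>i\<in>A. d i * e i)"
    by (simp add: sum.distrib sum_distrib_left)
  finally show ?thesis .
qed

lemma menu_iv: "2 \<le> m \<Longrightarrow> m \<le> K \<Longrightarrow> {1..m} \<in> menus K"
  by (auto simp: menus_def)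

lemma Mp_pos: "Mp_with K p \<sigma> f \<Longrightarrow> S \<in> menus K \<Longrightarrow> i \<in> {1..K} \<Longrightarrow> i \<in> S \<Longrightarrow> f i S > 0"
  unfolding Mp_with_def by blast

lemma Mp_sum: "Mp_with K p \<sigma> f \<Longrightarrow> S \<in> menus K \<Longrightarrow> (\<Sum>i\<in>S. f i S) = 1"
  unfolding Mp_with_def by blast

lemma Mp_ord: "Mp_with K p id f \<Longrightarrow> S \<in> menus K \<Longrightarrow> i \<in> S \<Longrightarrow> j \<in> S \<Longrightarrow> j < i
   \<Longrightarrow> f i S \<le> p * f j S"
  unfolding Mp_with_def by (metis id_apply)

lemma denom_pos:
  assumes M: "Mp_with K p id f" and p1: "p < 1" and m2: "2 \<le> m" and mK: "m \<le> K"
  shows "0 < 1 - real m * f m {1..m}"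
proof -
  have S: "{1..m} \<in> menus K" using menu_iv m2 mK .
  have pos: "\<And>i. i \<in> {1..m} \<Longrightarrow> f i {1..m} > 0"
  proof -
    fix i assume i: "i \<in> {1..m}"
    hence "i \<in> {1..K}" using mK by auto
    thus "f i {1..m} > 0" using Mp_pos[OF M S _ i] by blast
  qed
  have le: "\<And>i. i \<in> {1..m-1} \<Longrightarrow> f m {1..m} \<le> p * f i {1..m}"
  proof -
    fix i assume i: "i \<in> {1..m-1}"
    show "f m {1..m} \<le> p * f i {1..m}"
      by (rule Mp_ord[OF M S]) (use i m2 in auto)
  qed
  have lt: "\<And>i. i \<in> {1..m-1} \<Longrightarrow> f m {1..m} < f i {1..m}"
  proof -
    fix i assume i: "i \<in> {1..m-1}"
    have "f i {1..m} > 0" using pos i by auto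
    hence "p * f i {1..m} < f i {1..m}" using p1 by simp
    thus "f m {1..m} < f i {1..m}" using le[OF i] by linarith
  qed
  have sum1: "(\<Sum>i\<in>{1..m}. f i {1..m}) = 1" using Mp_sum[OF M S] .
  have split: "{1..m} = insert m {1..m-1}" using m2 by auto
  have "(\<Sum>i\<in>{1..m-1}. f m {1..m}) < (\<Sum>i\<in>{1..m-1}. f i {1..m})"
    by (rule sum_strict_mono) (use m2 lt in auto)
  hence "real (m-1) * f m {1..m} < (\<Sum>i\<in>{1..m-1}. f i {1..m})" by simp
  moreover have "1 = f m {1..m} + (\<Sum>i\<in>{1..m-1}. f i {1..m})"
    using sum1 sum_last[of m "\<lambda>i. f i {1..m}"] m2 by simp
  moreover have "real m * f m {1..m} = real (m-1) * f m {1..m} + f m {1..m}"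
  proof -
    have e: "real m = real (m-1) + 1" using m2 by simp
    show ?thesis unfolding e by (simp only: distrib_right mult_1_left)
  qed
  ultimately show ?thesis by linarith
qed

lemma fset_last: "1 \<le> m \<Longrightarrow> fset f {1..m} S = fset f {1..m-1} S + f m S"
proof -
  assume "1 \<le> m"
  thus ?thesis unfolding fset_def using sum_last[of m "\<lambda>i. f i S"] by simp
qed

theorem mainTheorem7:
  fixes K :: nat and p :: real and f :: pref
  assumes "K \<ge> 3" and "0 < p" and "p < 1"
    and "Mp_with K p id f"
  shows "\<forall>r\<in>{2..K-1}.
      (\<Sum>i\<in>{1..r-1}. (fset f {1..K-r+1} {1..K-i+1}
            - real (K - r + 1) * f (K - r + 2) {1..K-i+1}) * D K f i) = 1
    \<and> D K f r =
      (1 - (\<Sum>i\<in>{1..r-1}. (fset f {1..K-r} {1..K-i+1}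
            - real (K - r) * f (K - r + 1) {1..K-i+1}) * D K f i))
      / (1 - real (K - r + 1) * f (K - r + 1) {1..K-r+1})"
proof -
  define T where "T r i = fset f {1..K-r+1} {1..K-i+1}
            - real (K - r + 1) * f (K - r + 2) {1..K-i+1}" for r i
  define den where "den r = 1 - real (K - r + 1) * f (K - r + 1) {1..K-r+1}" for r
  have denpos: "den r > 0" if "2 \<le> r" "r \<le> K-1" for r
    unfolding den_def using denom_pos[OF assms(4) assms(3), of "K-r+1"] that by auto
  have Dr: "D K f r = real (K - r + 1) * (\<Sum>i\<in>{1..r-1}. Delta K f i r * D K f i) / den r"
    if "2 \<le> r" for r
  proof -
    have "\<not> r \<le> 1" using that by simp
    thus ?thesis unfolding den_def using D.simps[of K f r] by (simp only: if_not_P if_False)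
  qed
  have Dr': "real (K - r + 1) * (\<Sum>i\<in>{1..r-1}. Delta K f i r * D K f i) = D K f r * den r"
    if "2 \<le> r" "r \<le> K-1" for r
    using Dr[OF that(1)] denpos[OF that] by (simp add: field_simps)
  have Tsplit: "T r i = T (Suc r) i + real (K-r+1) * Delta K f i r"
    if "2 \<le> r" "r \<le> K-1" for r i
  proof -
    have e1: "K - Suc r + 1 = K - r" "K - Suc r + 2 = K - r + 1" using that by auto
    have "fset f {1..K-r+1} {1..K-i+1} = fset f {1..K-r} {1..K-i+1} + f (K-r+1) {1..K-i+1}"
      using fset_last[of "K-r+1" f] by simp
    moreover have "real (K-r+1) = real (K-r) + 1" by simp
    ultimately show ?thesis unfolding T_def Delta_def e1 by (simp add: algebra_simps)
  qed
  have Tlast: "T (Suc r) r = den r" if "2 \<le> r" "r \<le> K-1" for r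
  proof -
    have e1: "K - Suc r + 1 = K - r" "K - Suc r + 2 = K - r + 1" using that by auto
    have S: "{1..K-r+1} \<in> menus K" using menu_iv that by auto
    have sum1: "fset f {1..K-r+1} {1..K-r+1} = 1"
      using Mp_sum[OF assms(4) S] unfolding fset_def .
    have "fset f {1..K-r+1} {1..K-r+1} = fset f {1..K-r} {1..K-r+1} + f (K-r+1) {1..K-r+1}"
      using fset_last[of "K-r+1" f] by simp
    moreover have "K - r + 1 - 1 + 1 = K - r + 1" by simp
    moreover have "real (K-r+1) = real (K-r) + 1" by simp
    ultimately show ?thesis unfolding T_def den_def e1 using sum1
      by (simp add: algebra_simps)
  qed
  have g: "(\<Sum>i\<in>{1..r-1}. T r i * D K f i) = 1" if "2 \<le> r" "r \<le> K-1" for r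
    using that
  proof (induction r rule: nat_induct_at_least)
    case base
    have d1: "D K f 1 = 1 / (1 - real K * f K {1..K})" using D.simps[of K f 1] by (simp only: if_P order_refl if_True)
    have dp: "0 < 1 - real K * f K {1..K}"
      using denom_pos[OF assms(4) assms(3), of K] assms(1) by auto
    have S: "{1..K} \<in> menus K" using menu_iv assms(1) by auto
    have sum1: "fset f {1..K} {1..K} = 1"
      using Mp_sum[OF assms(4) S] unfolding fset_def .
    have "fset f {1..K} {1..K} = fset f {1..K-1} {1..K} + f K {1..K}"
      using fset_last[of K f] assms(1) by simp
    moreover have e: "K - 2 + 1 = K - 1" "K - 2 + 2 = K" "K - 1 + 1 = K" using assms(1) by auto
    moreover have "real (K-1) = real K - 1" using assms(1) by simp
    ultimately have "T 2 1 = 1 - real K * f K {1..K}" unfolding T_def using sum1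
      by (simp add: algebra_simps)
    thus ?case using d1 dp by simp
  next
    case (Suc r)
    have r: "2 \<le> r" "r \<le> K-1" using Suc by auto
    have IH: "(\<Sum>i\<in>{1..r-1}. T r i * D K f i) = 1" using Suc r by auto
    have "{1..Suc r - 1} = insert r {1..r-1}" using r by auto
    hence "(\<Sum>i\<in>{1..Suc r-1}. T (Suc r) i * D K f i)
        = T (Suc r) r * D K f r + (\<Sum>i\<in>{1..r-1}. T (Suc r) i * D K f i)"
      using r by simp
    also have "(\<Sum>i\<in>{1..r-1}. T (Suc r) i * D K f i)
        = (\<Sum>i\<in>{1..r-1}. T r i * D K f i) - real (K - r + 1) * (\<Sum>i\<in>{1..r-1}. Delta K f i r * D K f i)"
      using sum_shift[of "T r" "T (Suc r)" "real (K - r + 1)" "\<lambda>i. Delta K f i r" "D K f" "{1..r-1}", OF Tsplit[OF r]]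
      by linarith
    finally show ?case using IH Tlast[OF r] Dr'[OF r] by simp
  qed
  show ?thesis
  proof
    fix r assume "r \<in> {2..K-1}"
    hence r: "2 \<le> r" "r \<le> K-1" by auto
    have g1: "(\<Sum>i\<in>{1..r-1}. T r i * D K f i) = 1" using g[OF r] .
    have e: "K - Suc r + 1 = K - r" "K - Suc r + 2 = K - r + 1" using r by auto
    have "(\<Sum>i\<in>{1..r-1}. T (Suc r) i * D K f i)
        = (\<Sum>i\<in>{1..r-1}. T r i * D K f i) - real (K - r + 1) * (\<Sum>i\<in>{1..r-1}. Delta K f i r * D K f i)"
      using sum_shift[of "T r" "T (Suc r)" "real (K - r + 1)" "\<lambda>i. Delta K f i r" "D K f" "{1..r-1}", OF Tsplit[OF r]]
      by linarith
    hence "1 - (\<Sum>i\<in>{1..r-1}. T (Suc r) i * D K f i) = D K f r * den r"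
      using g1 Dr'[OF r] by simp
    hence "D K f r = (1 - (\<Sum>i\<in>{1..r-1}. T (Suc r) i * D K f i)) / den r"
      using denpos[OF r] by (simp add: field_simps)
    thus "(\<Sum>i\<in>{1..r-1}. (fset f {1..K-r+1} {1..K-i+1}
            - real (K - r + 1) * f (K - r + 2) {1..K-i+1}) * D K f i) = 1
    \<and> D K f r =
      (1 - (\<Sum>i\<in>{1..r-1}. (fset f {1..K-r} {1..K-i+1}
            - real (K - r) * f (K - r + 1) {1..K-i+1}) * D K f i))
      / (1 - real (K - r + 1) * f (K - r + 1) {1..K-r+1})"
    proof -
      have A: "(\<Sum>i\<in>{1..r-1}. (fset f {1..K-r} {1..K-i+1}
            - real (K - r) * f (K - r + 1) {1..K-i+1}) * D K f i)
           = (\<Sum>i\<in>{1..r-1}. T (Suc r) i * D K f i)"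
        by (rule sum.cong[OF refl]) (simp only: T_def e)
      have B: "(\<Sum>i\<in>{1..r-1}. (fset f {1..K-r+1} {1..K-i+1}
            - real (K - r + 1) * f (K - r + 2) {1..K-i+1}) * D K f i)
           = (\<Sum>i\<in>{1..r-1}. T r i * D K f i)"
        by (rule sum.cong) (simp_all add: T_def)
      show ?thesis unfolding A B using g1 \<open>D K f r = _\<close> unfolding den_def by simp
    qed
  qed
qed

end
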